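(* Let $P$ be a Sylow $p$-subgroup and $Q$ a Sylow $q$-subgroup of a finite group $G$, where $p\neq q$ are primes. (1) If $a\ge 1$ is an integer with $|P:C_P(Q)|\ge p^a$, then $\Pr(P,Q)\le \frac{p^a+q-1}{p^aq}$. (2) If $[P,Q]\neq 1$, then $\Pr(P,Q)\le\frac{p+q-1}{pq}$.
   Context: For subsets $X,Y$ of a finite group, $\Pr(X,Y)=|\{(x,y)\in X\times Y: xy=yx\}|/(|X||Y|)$. $C_P(Q)$ is the centralizer of $Q$ in $P$. *)

theory Defs
  imports "HOL-Algebra.Algebra" "HOL-Computational_Algebra.Primes"
begin

definition sylow_subgroup :: "('a, 'b) monoid_scheme \<Rightarrow> nat \<Rightarrow> 'a set \<Rightarrow> bool" where
  "sylow_subgroup G p P \<longleftrightarrow> subgroup P G \<and> card P = p ^ multiplicity p (order G)"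

definition comm_prob :: "('a, 'b) monoid_scheme \<Rightarrow> 'a set \<Rightarrow> 'a set \<Rightarrow> real" where
  "comm_prob G A B =
     real (card {(x, y). x \<in> A \<and> y \<in> B \<and> x \<otimes>\<^bsub>G\<^esub> y = y \<otimes>\<^bsub>G\<^esub> x})
       / (real (card A) * real (card B))"

definition centralizer_in :: "('a, 'b) monoid_scheme \<Rightarrow> 'a set \<Rightarrow> 'a set \<Rightarrow> 'a set" where
  "centralizer_in G P Q = {x \<in> P. \<forall>y \<in> Q. x \<otimes>\<^bsub>G\<^esub> y = y \<otimes>\<^bsub>G\<^esub> x}"

definition comm_subgroup :: "('a, 'b) monoid_scheme \<Rightarrow> 'a set \<Rightarrow> 'a set \<Rightarrow> 'a set" where
  "comm_subgroup G H K = generate G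
     {inv\<^bsub>G\<^esub> x \<otimes>\<^bsub>G\<^esub> inv\<^bsub>G\<^esub> y \<otimes>\<^bsub>G\<^esub> x \<otimes>\<^bsub>G\<^esub> y | x y. x \<in> H \<and> y \<in> K}"

end

theory Submission
  imports Defs
begin

lemma sub_card_dvd:
  assumes "group G" "subgroup I G" "subgroup J G" "I \<subseteq> J"
  shows "card I dvd card J"
proof -
  interpret group G by fact
  have s: "subgroup I (G\<lparr>carrier := J\<rparr>)" using subgroup_incl assms by blast
  have g: "group (G\<lparr>carrier := J\<rparr>)" using subgroup_imp_group assms(3) by blast
  have "card (rcosets\<^bsub>G\<lparr>carrier := J\<rparr>\<^esub> I) * card I = order (G\<lparr>carrier := J\<rparr>)"
    using group.lagrange[OF g s] .
  then show ?thesis unfolding order_def by (metis dvd_triv_right partial_object.select_convs(1) partial_object.surjective partial_object.update_convs(1))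
qed

lemma primepow_proper:
  fixes r :: nat
  assumes "Factorial_Ring.prime r" "d dvd r ^ k" "d < r ^ k"
  shows "d * r \<le> r ^ k"
proof -
  obtain i where i: "i \<le> k" "d = r ^ i" using assms divides_primepow_nat by blast
  have "i < k" using i assms(3) by (metis le_neq_implies_less less_irrefl)
  hence "r ^ Suc i \<le> r ^ k" using power_increasing[of "Suc i" k r] prime_ge_1_nat[OF assms(1)] by simp
  thus ?thesis using i by (simp add: mult.commute)
qed

lemma sub_proper_bound:
  assumes "group G" "subgroup I G" "subgroup J G" "I \<subset> J" "finite J"
    "card J = r ^ k" "Factorial_Ring.prime r"
  shows "card I * r \<le> card J"
proof -
  have "card I dvd card J" using sub_card_dvd assms by blast
  moreover have "card I < card J" using assms psubset_card_mono by blast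
  ultimately show ?thesis using primepow_proper assms by metis
qed

lemma cent_sub:
  fixes G (structure)
  assumes "group G" "subgroup Q G" "x \<in> carrier G"
  shows "subgroup {y \<in> Q. x \<otimes>\<^bsub>G\<^esub> y = y \<otimes>\<^bsub>G\<^esub> x} G"
proof -
  interpret group G by fact
  have QC: "Q \<subseteq> carrier G" using assms(2) subgroup.subset by blast
  show ?thesis
  proof (rule subgroupI)
    show "{y \<in> Q. x \<otimes> y = y \<otimes> x} \<subseteq> carrier G" using QC by blast
    show "{y \<in> Q. x \<otimes> y = y \<otimes> x} \<noteq> {}" using assms subgroup.one_closed by fastforce
  next
    fix a assume a: "a \<in> {y \<in> Q. x \<otimes> y = y \<otimes> x}"
    hence aQ: "a \<in> Q" and ac: "a \<in> carrier G" and e: "x \<otimes> a = a \<otimes> x" using QC by auto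
    have "x \<otimes> inv a = inv a \<otimes> (a \<otimes> x) \<otimes> inv a" using ac assms(3) by (simp add: m_assoc[symmetric])
    also have "\<dots> = inv a \<otimes> (x \<otimes> a) \<otimes> inv a" using e by simp
    also have "\<dots> = inv a \<otimes> x" using ac assms(3) by (simp add: m_assoc)
    finally have "x \<otimes> inv a = inv a \<otimes> x" .
    then show "inv a \<in> {y \<in> Q. x \<otimes> y = y \<otimes> x}" using aQ assms(2) subgroup.m_inv_closed by fastforce
  next
    fix a b assume "a \<in> {y \<in> Q. x \<otimes> y = y \<otimes> x}" "b \<in> {y \<in> Q. x \<otimes> y = y \<otimes> x}"
    hence aQ: "a \<in> Q" "b \<in> Q" and ac: "a \<in> carrier G" "b \<in> carrier G"
      and e: "x \<otimes> a = a \<otimes> x" "x \<otimes> b = b \<otimes> x" using QC by auto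
    have "x \<otimes> (a \<otimes> b) = a \<otimes> b \<otimes> x" using e ac assms(3) by (metis m_assoc)
    then show "a \<otimes> b \<in> {y \<in> Q. x \<otimes> y = y \<otimes> x}" using aQ assms(2) subgroup.m_closed by fastforce
  qed
qed

lemma arith_bound:
  fixes S c P Q q pa :: real
  assumes "S \<le> c * Q + (P - c) * Q / q" "c * pa \<le> P" "c > 0" "P > 0" "Q > 0" "q \<ge> 1" "pa > 0"
  shows "S / (P * Q) \<le> (pa + q - 1) / (pa * q)"
proof -
  have "S / (P * Q) \<le> (c * Q + (P - c) * Q / q) / (P * Q)"
    using assms by (simp add: divide_right_mono)
  also have "\<dots> = c * (q - 1) / (q * P) + 1 / q" using assms by (simp add: field_simps)
  also have "\<dots> \<le> (q - 1) / (q * pa) + 1 / q"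
  proof -
    have "c / P \<le> 1 / pa" using assms by (simp add: field_simps)
    hence "c / P * ((q - 1) / q) \<le> 1 / pa * ((q - 1) / q)"
      using assms by (intro mult_right_mono) auto
    thus ?thesis by (simp add: field_simps)
  qed
  also have "\<dots> = (pa + q - 1) / (pa * q)" using assms by (simp add: field_simps)
  finally show ?thesis .
qed

theorem lemma2p6:
  fixes G (structure) and P Q :: "'a set" and p q :: nat
  assumes "group G" and "finite (carrier G)"
    and "Factorial_Ring.prime p" and "Factorial_Ring.prime q" and "p \<noteq> q"
    and "sylow_subgroup G p P" and "sylow_subgroup G q Q"
  shows "(\<forall>a::nat. a \<ge> 1 \<and> real (card P) / real (card (centralizer_in G P Q)) \<ge> real p ^ a
           \<longrightarrow> comm_prob G P Q \<le> (real p ^ a + real q - 1) / (real p ^ a * real q))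
       \<and> (comm_subgroup G P Q \<noteq> {\<one>} \<longrightarrow>
           comm_prob G P Q \<le> (real p + real q - 1) / (real p * real q))"
proof -
  interpret group G by fact
  have sP: "subgroup P G" and cP: "card P = p ^ multiplicity p (order G)"
    using assms(6) unfolding sylow_subgroup_def by auto
  have sQ: "subgroup Q G" and cQ: "card Q = q ^ multiplicity q (order G)"
    using assms(7) unfolding sylow_subgroup_def by auto
  have PC: "P \<subseteq> carrier G" and QC: "Q \<subseteq> carrier G" using sP sQ subgroup.subset by auto
  have fP: "finite P" and fQ: "finite Q" using PC QC assms(2) finite_subset by auto
  have oneP: "\<one> \<in> P" and oneQ: "\<one> \<in> Q" using sP sQ subgroup.one_closed by auto
  have P0: "card P > 0" and Q0: "card Q > 0" using fP fQ oneP oneQ card_gt_0_iff by auto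
  define C where "C = centralizer_in G P Q"
  have CP: "C \<subseteq> P" unfolding C_def centralizer_in_def by auto
  have fC: "finite C" using CP fP finite_subset by auto
  have oneC: "\<one> \<in> C" unfolding C_def centralizer_in_def using oneP QC by auto
  have C0: "card C > 0" using fC oneC card_gt_0_iff by auto
  have CI: "C = \<Inter> ((\<lambda>y. {z \<in> P. y \<otimes> z = z \<otimes> y}) ` Q)"
    unfolding C_def centralizer_in_def using oneQ by auto
  have sC: "subgroup C G" unfolding CI
    by (rule subgroups_Inter) (use cent_sub[OF assms(1) sP] QC oneQ in auto)
  define Z where "Z x = {y \<in> Q. x \<otimes> y = y \<otimes> x}" for x
  have Sig: "{(x, y). x \<in> P \<and> y \<in> Q \<and> x \<otimes> y = y \<otimes> x} = Sigma P Z"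
    unfolding Z_def by auto
  have cardS: "card {(x, y). x \<in> P \<and> y \<in> Q \<and> x \<otimes> y = y \<otimes> x} = (\<Sum>x\<in>P. card (Z x))"
    unfolding Sig using fP fQ unfolding Z_def by (simp add: card_SigmaI)
  have ZC: "card (Z x) = card Q" if "x \<in> C" for x
  proof -
    have "Z x = Q" using that unfolding Z_def C_def centralizer_in_def by auto
    thus ?thesis by simp
  qed
  have ZN: "real (card (Z x)) \<le> real (card Q) / real q" if "x \<in> P - C" for x
  proof -
    have xc: "x \<in> carrier G" using that PC by auto
    have sZ: "subgroup (Z x) G" unfolding Z_def using cent_sub[OF assms(1) sQ xc] .
    have "Z x \<subset> Q" using that unfolding Z_def C_def centralizer_in_def by auto
    hence "card (Z x) * q \<le> card Q"
      using sub_proper_bound[OF assms(1) sZ sQ _ fQ cQ assms(4)] by blast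
    hence "real (card (Z x)) * real q \<le> real (card Q)" by (metis of_nat_le_iff of_nat_mult)
    moreover have "real q > 0" using assms(4) prime_gt_0_nat by simp
    ultimately show ?thesis by (simp add: field_simps)
  qed
  have sumle: "real (\<Sum>x\<in>P. card (Z x)) \<le> real (card C) * real (card Q) + (real (card P) - real (card C)) * real (card Q) / real q"
  proof -
    have "real (\<Sum>x\<in>P. card (Z x)) = (\<Sum>x\<in>P - C. real (card (Z x))) + (\<Sum>x\<in>C. real (card (Z x)))"
      using sum.subset_diff[OF CP fP, of "\<lambda>x. real (card (Z x))"] by simp
    also have "\<dots> \<le> (\<Sum>x\<in>P - C. real (card Q) / real q) + (\<Sum>x\<in>C. real (card Q))"
      using ZN ZC by (intro add_mono sum_mono) auto
    also have "\<dots> = (real (card P) - real (card C)) * real (card Q) / real q + real (card C) * real (card Q)"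
      using card_Diff_subset[OF fC CP] card_mono[OF fP CP] by (simp add: of_nat_diff)
    finally show ?thesis by simp
  qed
  have part1: "comm_prob G P Q \<le> (real p ^ a + real q - 1) / (real p ^ a * real q)"
    if "real (card C) * real p ^ a \<le> real (card P)" for a
    unfolding comm_prob_def cardS
    by (rule arith_bound[OF sumle that]) (use C0 P0 Q0 assms(3,4) prime_ge_1_nat prime_gt_0_nat in auto)
  show ?thesis
  proof (intro conjI allI impI)
    fix a :: nat assume a: "1 \<le> a \<and> real p ^ a \<le> real (card P) / real (card (centralizer_in G P Q))"
    hence "real (card C) * real p ^ a \<le> real (card P)" using C0 unfolding C_def[symmetric] by (simp add: field_simps)
    thus "comm_prob G P Q \<le> (real p ^ a + real q - 1) / (real p ^ a * real q)" by (rule part1)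
  next
    assume ne: "comm_subgroup G P Q \<noteq> {\<one>}"
    have "C \<noteq> P"
    proof
      assume CeqP: "C = P"
      have "{inv x \<otimes> inv y \<otimes> x \<otimes> y | x y. x \<in> P \<and> y \<in> Q} \<subseteq> {\<one>}"
      proof clarify
        fix x y assume xy: "x \<in> P" "y \<in> Q"
        hence xc: "x \<in> carrier G" and yc: "y \<in> carrier G" using PC QC by auto
        have e: "x \<otimes> y = y \<otimes> x" using xy CeqP unfolding C_def centralizer_in_def by auto
        have "inv x \<otimes> inv y \<otimes> x \<otimes> y = inv x \<otimes> inv y \<otimes> (x \<otimes> y)" using xc yc by (simp add: m_assoc)
        also have "\<dots> = inv x \<otimes> inv y \<otimes> (y \<otimes> x)" using e by simp
        also have "\<dots> = \<one>" using xc yc by (simp add: m_assoc[symmetric]) (simp add: m_assoc)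
        finally show "inv x \<otimes> inv y \<otimes> x \<otimes> y = \<one>" .
      qed
      hence "comm_subgroup G P Q \<subseteq> {\<one>}" unfolding comm_subgroup_def
        using generate_subgroup_incl triv_subgroup by blast
      moreover have "\<one> \<in> comm_subgroup G P Q" unfolding comm_subgroup_def by (rule generate.one)
      ultimately show False using ne by blast
    qed
    hence "C \<subset> P" using CP by auto
    hence "card C * p \<le> card P" using sub_proper_bound[OF assms(1) sC sP _ fP cP assms(3)] by blast
    hence "real (card C) * real p ^ 1 \<le> real (card P)" by (metis of_nat_le_iff of_nat_mult power_one_right)
    from part1[OF this] show "comm_prob G P Q \<le> (real p + real q - 1) / (real p * real q)" by simp
  qed
qed

end
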